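(* Let $q$ be a prime power, $b,k,t$ positive integers with $b\le k$, and let $wt_b:\mathbb{F}_q^k\to\{0,b,b+1,\ldots,k\}$ be the $b$-symbol weight function. Let $g_1=0$ and $g_i=b+i-2$ for $2\le i\le k-b+2$. Then \[ r_b^{wt_b}(k,t)\le N_b\big(\boldsymbol{B}^{(2)}_{wt_b}(t,g_1,\ldots,g_{k-b+2})\big), \] where $\boldsymbol{B}^{(2)}_{wt_b}(t,g_1,\ldots,g_{k-b+2})$ is the $(k-b+2)\times(k-b+2)$ matrix with entries \[ [\boldsymbol{B}^{(2)}_{wt_b}]_{ij}=\begin{cases}0,& i=j,\\ 2t-\max\{i,j\}+2,& i\ne j\text{ and } (i=1\text{ or } j=1),\\ 2t,& i,j>1\text{ and } 0<|i-j|<b,\\ [2t+b-|i-j|]^+,& i,j>1\text{ and } |i-j|\ge b.\end{cases} \]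
   Context: For $\boldsymbol{z}=(z_0,\ldots,z_{n-1}),\boldsymbol{w}\in\mathbb{F}_q^n$, $d_b(\boldsymbol{z},\boldsymbol{w})$ is the number of $i\in\{0,\ldots,n-1\}$ with $(z_i,\ldots,z_{i+b-1})\ne(w_i,\ldots,w_{i+b-1})$ (indices mod $n$), and $wt_b(\boldsymbol{x})=d_b(\boldsymbol{x},\boldsymbol{0})$. $[x]^+=\max\{x,0\}$. A systematic encoding $\mathrm{Enc}(\boldsymbol{x})=(\boldsymbol{x},p(\boldsymbol{x}))\in\mathbb{F}_q^{k+r}$ is a function-correcting $b$-symbol code for $f$ if $d_b(\mathrm{Enc}(\boldsymbol{x}_1),\mathrm{Enc}(\boldsymbol{x}_2))\ge 2t+1$ whenever $f(\boldsymbol{x}_1)\ne f(\boldsymbol{x}_2)$; $r_b^f(k,t)$ is the smallest $r$ for which one exists. For an $M\times M$ nonnegative integer matrix $\boldsymbol{B}$, $N_b(\boldsymbol{B})$ is the smallest $r$ such that there exist $\boldsymbol{p}_1,\ldots,\boldsymbol{p}_M\in\mathbb{F}_q^r$ (in some ordering) with $d_b(\boldsymbol{p}_i,\boldsymbol{p}_j)\ge[\boldsymbol{B}]_{ij}$ for all $i,j$. *)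

theory Defs
  imports Main
begin

definition bsym_dist :: "nat \<Rightarrow> 'a list \<Rightarrow> 'a list \<Rightarrow> nat" where
  "bsym_dist b z w = card {i. i < length z \<and>
      (\<exists>j<b. z ! ((i + j) mod length z) \<noteq> w ! ((i + j) mod length z))}"

definition bsym_wt :: "nat \<Rightarrow> 'a::zero list \<Rightarrow> nat" where
  "bsym_wt b x = bsym_dist b x (replicate (length x) 0)"

definition is_fcbsc :: "nat \<Rightarrow> ('a list \<Rightarrow> 'c) \<Rightarrow> nat \<Rightarrow> nat \<Rightarrow> nat \<Rightarrow> ('a list \<Rightarrow> 'a list) \<Rightarrow> bool" where
  "is_fcbsc b f k t r p \<longleftrightarrow>
     (\<forall>x. length x = k \<longrightarrow> length (p x) = r) \<and>
     (\<forall>x1 x2. length x1 = k \<longrightarrow> length x2 = k \<longrightarrow> f x1 \<noteq> f x2 \<longrightarrow>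
        2 * t + 1 \<le> bsym_dist b (x1 @ p x1) (x2 @ p x2))"

definition opt_redundancy :: "'a itself \<Rightarrow> nat \<Rightarrow> ('a list \<Rightarrow> 'c) \<Rightarrow> nat \<Rightarrow> nat \<Rightarrow> nat" where
  "opt_redundancy _ b f k t = (LEAST r. \<exists>p :: 'a list \<Rightarrow> 'a list. is_fcbsc b f k t r p)"

definition N_b :: "'a itself \<Rightarrow> nat \<Rightarrow> nat \<Rightarrow> (nat \<Rightarrow> nat \<Rightarrow> int) \<Rightarrow> nat" where
  "N_b _ b M B = (LEAST r. \<exists>P :: nat \<Rightarrow> 'a list.
      (\<forall>i\<in>{1..M}. length (P i) = r) \<and>
      (\<forall>i\<in>{1..M}. \<forall>j\<in>{1..M}. B i j \<le> int (bsym_dist b (P i) (P j))))"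

definition B2_wt :: "nat \<Rightarrow> nat \<Rightarrow> nat \<Rightarrow> nat \<Rightarrow> int" where
  "B2_wt b t i j =
     (if i = j then 0
      else if i = 1 \<or> j = 1 then 2 * int t - int (max i j) + 2
      else if \<bar>int i - int j\<bar> < int b then 2 * int t
      else max (2 * int t + int b - \<bar>int i - int j\<bar>) 0)"

end

theory Submission imports Defs begin

definition Zs :: "nat \<Rightarrow> 'a list \<Rightarrow> 'a list \<Rightarrow> nat set" where
  "Zs b z w = {i. i < length z \<and> (\<forall>j<b. z ! ((i + j) mod length z) = w ! ((i + j) mod length z))}"

lemma dist_Zs: "bsym_dist b z w + card (Zs b z w) = length z"
proof -
  let ?W = "{i. i < length z \<and> (\<exists>j<b. z ! ((i + j) mod length z) \<noteq> w ! ((i + j) mod length z))}"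
  have "?W \<union> Zs b z w = {..<length z}" unfolding Zs_def by auto
  moreover have "?W \<inter> Zs b z w = {}" unfolding Zs_def by auto
  moreover have fW: "finite ?W" by (rule finite_subset[of _ "{..<length z}"]) auto
  moreover have fZ: "finite (Zs b z w)" unfolding Zs_def by (rule finite_subset[of _ "{..<length z}"]) auto
  ultimately have "card ?W + card (Zs b z w) = card {..<length z}"
    using card_Un_disjoint[OF fW fZ] by simp
  then show ?thesis unfolding bsym_dist_def by simp
qed

lemma dist_sym: "length z = length w \<Longrightarrow> bsym_dist b z w = bsym_dist b w z"
  unfolding bsym_dist_def by (rule arg_cong[where f=card]) auto

lemma dist_tri: assumes "length x = length y" "length y = length z"
  shows "bsym_dist b x z \<le> bsym_dist b x y + bsym_dist b y z"
proof -
  let ?S = "\<lambda>u v. {i. i < length x \<and> (\<exists>j<b. u ! ((i + j) mod length x) \<noteq> v ! ((i + j) mod length x))}"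
  have sub: "?S x z \<subseteq> ?S x y \<union> ?S y z" by auto
  hence "card (?S x z) \<le> card (?S x y) + card (?S y z)"
  proof -
    have f1: "finite (?S x y)" by (rule finite_subset[of _ "{..<length x}"]) auto
    have f2: "finite (?S y z)" by (rule finite_subset[of _ "{..<length x}"]) auto
    have "card (?S x z) \<le> card (?S x y \<union> ?S y z)" using f1 f2 sub by (intro card_mono) auto
    also have "\<dots> \<le> card (?S x y) + card (?S y z)" by (rule card_Un_le)
    finally show ?thesis .
  qed
  thus ?thesis unfolding bsym_dist_def using assms by simp
qed

lemma dist_ge_b:
  assumes "length x = k" "length y = k" "b \<le> k" "x \<noteq> y"
  shows "b \<le> bsym_dist b x y"
proof -
  obtain s where s: "s < k" "x ! s \<noteq> y ! s" using assms nth_equalityI[of x y] by auto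
  define f where "f m = (if m \<le> s then s - m else s + k - m)" for m
  have fm: "f m + m = s \<or> f m + m = s + k" if "m < b" for m using that assms s unfolding f_def by auto
  have "inj_on f {..<b}"
  proof
    fix m m' assume "m \<in> {..<b}" "m' \<in> {..<b}" "f m = f m'"
    then show "m = m'" using fm[of m] fm[of m'] assms by auto
  qed
  moreover have "f ` {..<b} \<subseteq> {i. i < length x \<and> (\<exists>j<b. x ! ((i + j) mod length x) \<noteq> y ! ((i + j) mod length x))}"
  proof
    fix i assume "i \<in> f ` {..<b}"
    then obtain m where m: "m < b" "i = f m" by auto
    have "i < k" using m s assms unfolding f_def by auto
    moreover have "(i + m) mod k = s" using fm[OF m(1)] m s by auto
    ultimately show "i \<in> {i. i < length x \<and> (\<exists>j<b. x ! ((i + j) mod length x) \<noteq> y ! ((i + j) mod length x))}"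
      using m s assms by auto
  qed
  ultimately have "card (f ` {..<b}) \<le> bsym_dist b x y" unfolding bsym_dist_def
    by (intro card_mono) auto
  thus ?thesis using \<open>inj_on f {..<b}\<close> by (simp add: card_image)
qed

lemma hamming_le: assumes b0: "0 < b" shows "card {s. s < length z \<and> z ! s \<noteq> w ! s} \<le> bsym_dist b z w"
  unfolding bsym_dist_def
proof (rule card_mono)
  show "finite {i. i < length z \<and> (\<exists>j<b. z ! ((i + j) mod length z) \<noteq> w ! ((i + j) mod length z))}"
    by (rule finite_subset[of _ "{..<length z}"]) auto
  show "{s. s < length z \<and> z ! s \<noteq> w ! s} \<subseteq> {i. i < length z \<and> (\<exists>j<b. z ! ((i + j) mod length z) \<noteq> w ! ((i + j) mod length z))}"
  proof
    fix s assume "s \<in> {s. s < length z \<and> z ! s \<noteq> w ! s}"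
    then show "s \<in> {i. i < length z \<and> (\<exists>j<b. z ! ((i + j) mod length z) \<noteq> w ! ((i + j) mod length z))}"
      using b0 by (auto intro!: exI[of _ 0])
  qed
qed

lemma core:
  assumes lx: "length x1 = k" "length x2 = k" and lp: "length p1 = r" "length p2 = r"
    and b: "0 < b" "b \<le> k"
  shows "card (Zs b (x1 @ p1) (x2 @ p2)) \<le> card (Zs b x1 x2) + card (Zs b p1 p2) + (b - 1)"
proof -
  define n where "n = k + r"
  define Hx where "Hx m = (\<forall>s<m. s < k \<longrightarrow> x1 ! s = x2 ! s)" for m
  define Hp where "Hp m = (\<forall>s<m. s < r \<longrightarrow> p1 ! s = p2 ! s)" for m
  let ?Z = "Zs b (x1 @ p1) (x2 @ p2)"
  let ?X = "Zs b x1 x2"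
  let ?P = "Zs b p1 p2"
  have Zz: "i \<in> ?Z \<longleftrightarrow> i < n \<and> (\<forall>j<b. (x1 @ p1) ! ((i + j) mod n) = (x2 @ p2) ! ((i + j) mod n))" for i
    unfolding Zs_def n_def using lx lp by simp
  have ZX: "i \<in> ?X \<longleftrightarrow> i < k \<and> (\<forall>j<b. x1 ! ((i + j) mod k) = x2 ! ((i + j) mod k))" for i
    unfolding Zs_def using lx by simp
  have ZP: "i \<in> ?P \<longleftrightarrow> i < r \<and> (\<forall>j<b. p1 ! ((i + j) mod r) = p2 ! ((i + j) mod r))" for i
    unfolding Zs_def using lp by simp
  have nth1: "(x1 @ p1) ! s = (if s < k then x1 ! s else p1 ! (s - k))" for s using lx by (simp add: nth_append)
  have nth2: "(x2 @ p2) ! s = (if s < k then x2 ! s else p2 ! (s - k))" for s using lx by (simp add: nth_append)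
  have a: "i \<in> ?X" if "i \<in> ?Z" "i < k" "i + b \<le> k" for i
  proof -
    have "x1 ! ((i + j) mod k) = x2 ! ((i + j) mod k)" if "j < b" for j
    proof -
      have "i + j < k" using that \<open>i + b \<le> k\<close> by simp
      moreover have "i + j < n" using \<open>i + j < k\<close> n_def by simp
      ultimately show ?thesis using Zz[of i] \<open>i \<in> ?Z\<close> that nth1 nth2 by auto
    qed
    then show ?thesis using ZX \<open>i < k\<close> by auto
  qed
  have bb: "i \<in> ?X" if "i \<in> ?Z" "i < k" "k < i + b" "Hp (b - (k - i)) \<longrightarrow> Hx (b - (k - i))" for i
  proof -
    have "Hp (b - (k - i))" unfolding Hp_def
    proof (intro allI impI)
      fix s assume s: "s < b - (k - i)" "s < r"
      have e: "(i + (k - i + s)) mod n = k + s" using s \<open>i < k\<close> n_def by simp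
      have "k - i + s < b" using s by linarith
      then have "(x1 @ p1) ! ((i + (k - i + s)) mod n) = (x2 @ p2) ! ((i + (k - i + s)) mod n)"
        using Zz[of i] \<open>i \<in> ?Z\<close> by blast
      then have "(x1 @ p1) ! (k + s) = (x2 @ p2) ! (k + s)" unfolding e .
      then show "p1 ! s = p2 ! s" using nth1 nth2 by simp
    qed
    then have H: "Hx (b - (k - i))" using that by blast
    have "x1 ! ((i + j) mod k) = x2 ! ((i + j) mod k)" if "j < b" for j
    proof (cases "i + j < k")
      case True
      then have "i + j < n" using n_def by simp
      then show ?thesis using True Zz[of i] \<open>i \<in> ?Z\<close> \<open>j < b\<close> nth1 nth2 by auto
    next
      case False
      have "i + j - k < k" using \<open>j < b\<close> b \<open>i < k\<close> by linarith
      have "(i + j) mod k = (i + j - k) mod k" using False by (simp add: le_mod_geq)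
      also have "\<dots> = i + j - k" using \<open>i + j - k < k\<close> by simp
      finally have "(i + j) mod k = i + j - k" .
      moreover have "i + j - k < b - (k - i)" using False \<open>j < b\<close> \<open>i < k\<close> by linarith
      moreover have "i + j - k < k" using \<open>j < b\<close> b \<open>i < k\<close> by linarith
      ultimately show ?thesis using H unfolding Hx_def by simp
    qed
    then show ?thesis using ZX \<open>i < k\<close> by auto
  qed
  have c: "j \<in> ?P" if "k + j \<in> ?Z" "j < r" "j + b \<le> r" for j
  proof -
    have "p1 ! ((j + s) mod r) = p2 ! ((j + s) mod r)" if "s < b" for s
    proof -
      have "j + s < r" using that \<open>j + b \<le> r\<close> by simp
      moreover have "k + j + s < n" using \<open>j + s < r\<close> n_def by simp
      ultimately show ?thesis using Zz[of "k + j"] \<open>k + j \<in> ?Z\<close> that nth1 nth2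
        by (auto simp: add.assoc)
    qed
    then show ?thesis using ZP \<open>j < r\<close> by auto
  qed
  have d: "j \<in> ?P" if "k + j \<in> ?Z" "j < r" "r < j + b" "Hx (b - (r - j)) \<longrightarrow> Hp (b - (r - j))" for j
  proof -
    have "Hx (b - (r - j))" unfolding Hx_def
    proof (intro allI impI)
      fix s assume s: "s < b - (r - j)" "s < k"
      have e1: "k + j + (r - j + s) = n + s" using \<open>j < r\<close> n_def by simp
      have "s < n" using s n_def by simp
      then have e: "(k + j + (r - j + s)) mod n = s" unfolding e1 by simp
      have "r - j + s < b" using s by linarith
      then have "(x1 @ p1) ! ((k + j + (r - j + s)) mod n) = (x2 @ p2) ! ((k + j + (r - j + s)) mod n)"
        using Zz[of "k + j"] \<open>k + j \<in> ?Z\<close> by blast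
      then have "(x1 @ p1) ! s = (x2 @ p2) ! s" unfolding e .
      then show "x1 ! s = x2 ! s" using nth1 nth2 s by simp
    qed
    then have H: "Hp (b - (r - j))" using that by blast
    have "p1 ! ((j + s) mod r) = p2 ! ((j + s) mod r)" if "s < b" for s
    proof (cases "j + s < r")
      case True
      then have "k + j + s < n" using n_def by simp
      then show ?thesis using True Zz[of "k + j"] \<open>k + j \<in> ?Z\<close> \<open>s < b\<close> nth1 nth2
        by (auto simp: add.assoc)
    next
      case False
      have r0: "0 < r" using \<open>j < r\<close> by simp
      have "(j + s) mod r = (j + s - r) mod r" using False by (simp add: le_mod_geq)
      also have "\<dots> \<le> j + s - r" by (rule mod_less_eq_dividend)
      finally have "(j + s) mod r \<le> j + s - r" .
      moreover have "j + s - r < b - (r - j)" using False \<open>s < b\<close> \<open>j < r\<close> by linarith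
      moreover have "(j + s) mod r < r" using r0 by simp
      ultimately show ?thesis using H unfolding Hp_def by simp
    qed
    then show ?thesis using ZP \<open>j < r\<close> by auto
  qed
  have Hmono: "Hx m" if "Hx m'" "m \<le> m'" for m m' using that unfolding Hx_def by auto
  have Hpmono: "Hp m" if "Hp m'" "m \<le> m'" for m m' using that unfolding Hp_def by auto
  have cases: "(\<forall>m. Hx m \<longrightarrow> Hp m) \<or> (\<forall>m. Hp m \<longrightarrow> Hx m)"
  proof (rule ccontr)
    assume "\<not> ?thesis"
    then obtain m1 m2 where "Hx m1" "\<not> Hp m1" "Hp m2" "\<not> Hx m2" by blast
    then show False
    proof (cases "m1 \<le> m2")
      case True then show False using Hpmono[OF \<open>Hp m2\<close> True] \<open>\<not> Hp m1\<close> by simp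
    next
      case False then show False using Hmono[OF \<open>Hx m1\<close>, of m2] \<open>\<not> Hx m2\<close> by simp
    qed
  qed
  have finZ: "finite ?X" "finite ?P" unfolding Zs_def by auto
  have Zsub: "i < n" if "i \<in> ?Z" for i using Zz that by blast
  show ?thesis
  proof (cases "\<forall>m. Hx m \<longrightarrow> Hp m")
    case True
    have "?Z \<subseteq> ?X \<union> {k - b + 1..<k} \<union> (\<lambda>j. k + j) ` ?P"
    proof
      fix i assume i: "i \<in> ?Z"
      show "i \<in> ?X \<union> {k - b + 1..<k} \<union> (\<lambda>j. k + j) ` ?P"
      proof (cases "i < k")
        case True
        show ?thesis
        proof (cases "i + b \<le> k")
          case True then show ?thesis using a[OF i \<open>i < k\<close>] by blast
        next
          case False
          then have "k - b + 1 \<le> i" using b by linarith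
          then show ?thesis using \<open>i < k\<close> by simp
        qed
      next
        case False
        define j where "j = i - k"
        have ij: "i = k + j" using False j_def by simp
        have "j < r" using Zsub[OF i] ij n_def by simp
        have "j \<in> ?P"
        proof (cases "j + b \<le> r")
          case True then show ?thesis using c i ij \<open>j < r\<close> by blast
        next
          case False then show ?thesis using d i ij \<open>j < r\<close> \<open>\<forall>m. Hx m \<longrightarrow> Hp m\<close> by auto
        qed
        then show ?thesis using ij by blast
      qed
    qed
    then have "card ?Z \<le> card (?X \<union> {k - b + 1..<k} \<union> (\<lambda>j. k + j) ` ?P)"
      using finZ by (intro card_mono) auto
    also have "\<dots> \<le> card ?X + card {k - b + 1..<k} + card ((\<lambda>j. k + j) ` ?P)"
      using card_Un_le[of "?X \<union> {k - b + 1..<k}" "(\<lambda>j. k + j) ` ?P"] card_Un_le[of ?X "{k - b + 1..<k}"] by linarith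
    also have "\<dots> \<le> card ?X + (b - 1) + card ?P"
      using card_image_le[OF finZ(2), of "\<lambda>j. k + j"] b by simp
    finally show ?thesis by simp
  next
    case False
    then have HH: "\<forall>m. Hp m \<longrightarrow> Hx m" using cases by blast
    have "?Z \<subseteq> ?X \<union> {n - b + 1..<n} \<union> (\<lambda>j. k + j) ` ?P"
    proof
      fix i assume i: "i \<in> ?Z"
      show "i \<in> ?X \<union> {n - b + 1..<n} \<union> (\<lambda>j. k + j) ` ?P"
      proof (cases "i < k")
        case True
        have "i \<in> ?X"
        proof (cases "i + b \<le> k")
          case True then show ?thesis using a i \<open>i < k\<close> by blast
        next
          case False then show ?thesis using bb i \<open>i < k\<close> HH by auto
        qed
        then show ?thesis by blast
      next
        case False
        define j where "j = i - k"
        have ij: "i = k + j" using False j_def by simp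
        have "j < r" using Zsub[OF i] ij n_def by simp
        show ?thesis
        proof (cases "j + b \<le> r")
          case True then show ?thesis using c i ij \<open>j < r\<close> by blast
        next
          case False
          then have "n - b + 1 \<le> i" "i < n" using ij \<open>j < r\<close> n_def b by linarith+
          then show ?thesis by simp
        qed
      qed
    qed
    then have "card ?Z \<le> card (?X \<union> {n - b + 1..<n} \<union> (\<lambda>j. k + j) ` ?P)"
      using finZ by (intro card_mono) auto
    also have "\<dots> \<le> card ?X + card {n - b + 1..<n} + card ((\<lambda>j. k + j) ` ?P)"
      using card_Un_le[of "?X \<union> {n - b + 1..<n}" "(\<lambda>j. k + j) ` ?P"] card_Un_le[of ?X "{n - b + 1..<n}"] by linarith
    also have "\<dots> \<le> card ?X + (b - 1) + card ?P"
      using card_image_le[OF finZ(2), of "\<lambda>j. k + j"] b n_def by simp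
    finally show ?thesis by simp
  qed
qed

lemma concat_bound:
  assumes "length x1 = k" "length x2 = k" "length p1 = r" "length p2 = r" "0 < b" "b \<le> k"
  shows "bsym_dist b x1 x2 + bsym_dist b p1 p2 \<le> bsym_dist b (x1 @ p1) (x2 @ p2) + (b - 1)"
  using core[OF assms] dist_Zs[of b x1 x2] dist_Zs[of b p1 p2] dist_Zs[of b "x1 @ p1" "x2 @ p2"] assms
  by simp

lemma B2_le: "0 < b \<Longrightarrow> B2_wt b t i j \<le> 2 * int t + int b"
  unfolding B2_wt_def by auto

lemma N_exists:
  fixes b M :: nat and t :: nat
  assumes "0 < b"
  shows "\<exists>r. \<exists>P :: nat \<Rightarrow> 'a::field list. (\<forall>i\<in>{1..M}. length (P i) = r) \<and>
      (\<forall>i\<in>{1..M}. \<forall>j\<in>{1..M}. B2_wt b t i j \<le> int (bsym_dist b (P i) (P j)))"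
proof -
  define L where "L = 2 * t + b"
  define P :: "nat \<Rightarrow> 'a list" where "P i = map (\<lambda>s. if s div L = i then 1 else 0) [0..<(M+1)*L]" for i
  have "B2_wt b t i j \<le> int (bsym_dist b (P i) (P j))" if "i \<in> {1..M}" "j \<in> {1..M}" for i j
  proof (cases "i = j")
    case True then show ?thesis unfolding B2_wt_def by simp
  next
    case False
    have L0: "0 < L" using assms L_def by simp
    have sub: "{i*L..<i*L+L} \<subseteq> {s. s < length (P i) \<and> P i ! s \<noteq> P j ! s}"
    proof
      fix s assume s: "s \<in> {i*L..<i*L+L}"
      have sdiv: "s div L = i" using s L0
        by (intro div_nat_eqI) (auto simp: mult.commute)
      have "i \<le> M" using that by simp
      then have "i*L \<le> M*L" by (rule mult_le_mono1)
      then have h: "i*L + L \<le> (M+1)*L" by simp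
      have "s < i*L+L" using s by simp
      then have "s < (M+1)*L" using h by linarith
      then show "s \<in> {s. s < length (P i) \<and> P i ! s \<noteq> P j ! s}"
        unfolding P_def using sdiv False by simp
    qed
    then have "L \<le> card {s. s < length (P i) \<and> P i ! s \<noteq> P j ! s}"
    proof -
      have "card {i*L..<i*L+L} \<le> card {s. s < length (P i) \<and> P i ! s \<noteq> P j ! s}"
        by (rule card_mono) (use sub in auto)
      then show ?thesis by simp
    qed
    also have "\<dots> \<le> bsym_dist b (P i) (P j)" using hamming_le assms by blast
    finally show ?thesis using B2_le[of b t i j] assms L_def by linarith
  qed
  moreover have "\<forall>i\<in>{1..M}. length (P i) = (M+1)*L" unfolding P_def by simp
  ultimately show ?thesis by blast
qed

theorem lemma6p1:
  fixes b k t :: nat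
  assumes "0 < b" "b \<le> k" "0 < t"
  shows "opt_redundancy TYPE('a::{finite,field}) b (bsym_wt b) k t
           \<le> N_b TYPE('a) b (k - b + 2) (B2_wt b t)"
proof -
  define M where "M = k - b + 2"
  define N where "N = N_b TYPE('a) b M (B2_wt b t)"
  have "\<exists>P :: nat \<Rightarrow> 'a list. (\<forall>i\<in>{1..M}. length (P i) = N) \<and>
      (\<forall>i\<in>{1..M}. \<forall>j\<in>{1..M}. B2_wt b t i j \<le> int (bsym_dist b (P i) (P j)))"
    unfolding N_def N_b_def using N_exists[OF assms(1), of M t, where 'a='a]
    by (rule LeastI_ex)
  then obtain P :: "nat \<Rightarrow> 'a list" where Plen: "\<forall>i\<in>{1..M}. length (P i) = N"
    and PB: "\<forall>i\<in>{1..M}. \<forall>j\<in>{1..M}. B2_wt b t i j \<le> int (bsym_dist b (P i) (P j))" by blast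
  define idx where "idx x = (if bsym_wt b x = 0 then 1 else bsym_wt b x - b + 2)" for x :: "'a list"
  define p where "p x = P (idx x)" for x
  have wt_le: "bsym_wt b x \<le> k" if "length x = k" for x :: "'a list"
    using dist_Zs[of b x "replicate (length x) 0"] that unfolding bsym_wt_def by simp
  have wt_ge: "b \<le> bsym_wt b x" if "length x = k" "bsym_wt b x \<noteq> 0" for x :: "'a list"
  proof -
    have "x \<noteq> replicate k 0"
    proof
      assume "x = replicate k 0"
      then have "bsym_wt b x = 0" unfolding bsym_wt_def bsym_dist_def by simp
      then show False using that by simp
    qed
    then show ?thesis using dist_ge_b[of x k "replicate k 0" b] that assms unfolding bsym_wt_def by simp
  qed
  have idx_in: "idx x \<in> {1..M}" if "length x = k" for x
    using wt_le[OF that] wt_ge[OF that] assms unfolding idx_def M_def by auto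
  have "is_fcbsc b (bsym_wt b) k t N p"
    unfolding is_fcbsc_def
  proof (intro conjI allI impI)
    fix x :: "'a list" assume "length x = k" then show "length (p x) = N" using idx_in Plen p_def by simp
  next
    fix x1 x2 :: "'a list" assume l1: "length x1 = k" and l2: "length x2 = k"
      and ne: "bsym_wt b x1 \<noteq> bsym_wt b x2"
    define w1 where "w1 = bsym_wt b x1"
    define w2 where "w2 = bsym_wt b x2"
    define D where "D = bsym_dist b (p x1) (p x2)"
    define Dx where "Dx = bsym_dist b x1 x2"
    define Dz where "Dz = bsym_dist b (x1 @ p x1) (x2 @ p x2)"
    have lp: "length (p x1) = N" "length (p x2) = N" using idx_in l1 l2 Plen p_def by auto
    have cb: "Dx + D \<le> Dz + (b - 1)" unfolding Dx_def D_def Dz_def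
      using concat_bound[OF l1 l2 lp assms(1,2)] .
    have "x1 \<noteq> x2" using ne by auto
    then have Dxb: "b \<le> Dx" using dist_ge_b[OF l1 l2 assms(2)] Dx_def by simp
    have z1: "length (replicate k (0::'a)) = k" by simp
    have t1: "w1 \<le> Dx + w2" using dist_tri[of x1 x2 "replicate k 0" b] l1 l2
      unfolding w1_def w2_def Dx_def bsym_wt_def by simp
    have t2: "w2 \<le> Dx + w1" using dist_tri[of x2 x1 "replicate k 0" b] l1 l2 dist_sym[of x1 x2 b]
      unfolding w1_def w2_def Dx_def bsym_wt_def by simp
    have DB: "B2_wt b t (idx x1) (idx x2) \<le> int D"
      using PB idx_in l1 l2 unfolding D_def p_def by blast
    have w1g: "w1 \<noteq> 0 \<Longrightarrow> b \<le> w1" using wt_ge l1 w1_def by blast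
    have w2g: "w2 \<noteq> 0 \<Longrightarrow> b \<le> w2" using wt_ge l2 w2_def by blast
    have ne': "w1 \<noteq> w2" using ne w1_def w2_def by simp
    have i1: "idx x1 = (if w1 = 0 then 1 else w1 - b + 2)" using idx_def w1_def by simp
    have i2: "idx x2 = (if w2 = 0 then 1 else w2 - b + 2)" using idx_def w2_def by simp
    have cbi: "int Dx + int D \<le> int Dz + int b - 1" using cb assms(1) by linarith
    have "2 * t + 1 \<le> Dz"
    proof (cases "w1 = 0")
      case True
      then have "w2 \<noteq> 0" using ne' by simp
      then have "b \<le> w2" using w2g by simp
      have ix: "idx x1 = 1" "idx x2 = w2 - b + 2" "w2 - b + 2 \<noteq> 1" using i1 i2 True \<open>w2 \<noteq> 0\<close> by auto
      have "B2_wt b t (idx x1) (idx x2) = 2 * int t - int (w2 - b + 2) + 2"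
        unfolding B2_wt_def ix using ix(3) by (simp add: max_def)
      then have "2 * int t + int b - int w2 \<le> int D" using DB \<open>b \<le> w2\<close> by simp
      moreover have "w2 \<le> Dx" using t2 True by simp
      ultimately show ?thesis using cbi by linarith
    next
      case False
      note F1 = False
      show ?thesis
      proof (cases "w2 = 0")
        case True
        have "b \<le> w1" using w1g F1 by simp
        have ix: "idx x2 = 1" "idx x1 = w1 - b + 2" "w1 - b + 2 \<noteq> 1" using i1 i2 True F1 by auto
        have "B2_wt b t (idx x1) (idx x2) = 2 * int t - int (w1 - b + 2) + 2"
          unfolding B2_wt_def ix using ix(3) by (simp add: max_def)
        then have "2 * int t + int b - int w1 \<le> int D" using DB \<open>b \<le> w1\<close> by simp
        moreover have "w1 \<le> Dx" using t1 True by simp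
        ultimately show ?thesis using cbi by linarith
      next
        case False
        have "b \<le> w1" "b \<le> w2" using w1g w2g F1 False by auto
        have ix: "idx x1 = w1 - b + 2" "idx x2 = w2 - b + 2" using i1 i2 F1 False by auto
        have n1: "idx x1 \<noteq> 1" "idx x2 \<noteq> 1" "idx x1 \<noteq> idx x2" using ix \<open>b \<le> w1\<close> \<open>b \<le> w2\<close> ne' by auto
        have dif: "\<bar>int (idx x1) - int (idx x2)\<bar> = \<bar>int w1 - int w2\<bar>"
          using ix \<open>b \<le> w1\<close> \<open>b \<le> w2\<close> by simp
        have dx: "\<bar>int w1 - int w2\<bar> \<le> int Dx" using t1 t2 by linarith
        show ?thesis
        proof (cases "\<bar>int w1 - int w2\<bar> < int b")
          case True
          then have "B2_wt b t (idx x1) (idx x2) = 2 * int t" unfolding B2_wt_def using n1 dif by simp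
          then show ?thesis using DB cbi Dxb by linarith
        next
          case False
          then have "B2_wt b t (idx x1) (idx x2) = max (2 * int t + int b - \<bar>int w1 - int w2\<bar>) 0"
            unfolding B2_wt_def using n1 dif by simp
          then have "2 * int t + int b - \<bar>int w1 - int w2\<bar> \<le> int D" using DB by linarith
          then show ?thesis using cbi dx by linarith
        qed
      qed
    qed
    then show "2 * t + 1 \<le> bsym_dist b (x1 @ p x1) (x2 @ p x2)" using Dz_def by simp
  qed
  then have "opt_redundancy TYPE('a) b (bsym_wt b) k t \<le> N"
    unfolding opt_redundancy_def by (intro Least_le) blast
  then show ?thesis using N_def M_def by simp
qed

end
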